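(* For every integer $n\ge 1$, $$ \nu_3(T(n))=\begin{cases} 0, & n\equiv 1,2,3,4,5,6,8,10,11\pmod{13};\\ 1, & n\equiv 7\pmod{13};\\ \nu_3(n)+2, & n\equiv 0\pmod{13};\\ \nu_3(n+1)+2, & n\equiv 12\pmod{13};\\ 4, & n\equiv 9\pmod{39};\\ \nu_3(n+17)+4, & n\equiv 22\pmod{39};\\ \nu_3(n+4)+4, & n\equiv 35\pmod{39}. \end{cases} $$
   Context: $T:\mathbb Z\to\mathbb Z$ is the Tribonacci sequence defined by $T(0)=0$, $T(1)=T(2)=1$ and $T(n+3)=T(n+2)+T(n+1)+T(n)$ for all $n\in\mathbb Z$. For a prime $p$, $\nu_p$ denotes the $p$-adic valuation (exponent of $p$), with $\nu_p(0)=+\infty$. *)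

theory Defs
  imports "HOL-Computational_Algebra.Computational_Algebra"
begin

fun trib :: "nat \<Rightarrow> int" where
  "trib 0 = 0"
| "trib (Suc 0) = 1"
| "trib (Suc (Suc 0)) = 1"
| "trib (Suc (Suc (Suc n))) = trib (Suc (Suc n)) + trib (Suc n) + trib n"

end

theory Submission
  imports Defs
begin


fun tn :: "nat \<Rightarrow> int" where
  "tn 0 = 0" | "tn (Suc 0) = 0" | "tn (Suc (Suc 0)) = 1"
| "tn (Suc (Suc (Suc m))) = tn m - tn (Suc m) - tn (Suc (Suc m))"

definition Tz :: "int \<Rightarrow> int" where
  "Tz i = (if i \<ge> 0 then trib (nat i) else tn (nat (-i)))"

lemma trib_rec: "trib (n+3) = trib (n+2) + trib (n+1) + trib n"
  by (simp add: numeral_eq_Suc)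

lemma Tz_nat: "Tz (int n) = trib n" by (simp add: Tz_def)

lemma Tz_rec: "Tz (i+3) = Tz (i+2) + Tz (i+1) + Tz i"
proof (cases "i \<ge> 0")
  case True
  then obtain n where "i = int n" by (metis nonneg_eq_int)
  then show ?thesis using trib_rec[of n] by (simp add: Tz_def nat_add_distrib)
next
  case False
  then have "i = -1 \<or> i = -2 \<or> i = -3 \<or> i \<le> -4" by linarith
  then show ?thesis
  proof (elim disjE)
    assume "i \<le> -4"
    then obtain m where m: "i = - int m - 4" by (metis add.commute diff_add_cancel diff_diff_eq2 int_minus le_add_diff_inverse2 minus_diff_eq nat_le_iff of_nat_numeral zle_iff_zadd)
    have "tn (Suc (Suc (Suc (Suc m)))) = tn (Suc m) - tn (Suc (Suc m)) - tn (Suc (Suc (Suc m)))" by simp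
    then show ?thesis using m by (simp add: Tz_def nat_add_distrib numeral_eq_Suc)
  qed (auto simp: Tz_def numeral_eq_Suc)
qed

lemma tz0: "Tz 0 = 0" by (simp add: Tz_def)
lemma tz1: "Tz 1 = 1" by (simp add: Tz_def)
lemma tz2: "Tz 2 = 1" by (simp add: Tz_def numeral_eq_Suc)
lemma tz3: "Tz 3 = 2" using Tz_rec[of 0] tz2 tz1 tz0 by simp
lemma tz4: "Tz 4 = 4" using Tz_rec[of 1] tz3 tz2 tz1 by simp
lemma tz5: "Tz 5 = 7" using Tz_rec[of 2] tz4 tz3 tz2 by simp
lemma tz6: "Tz 6 = 13" using Tz_rec[of 3] tz5 tz4 tz3 by simp
lemma tz7: "Tz 7 = 24" using Tz_rec[of 4] tz6 tz5 tz4 by simp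
lemma tz8: "Tz 8 = 44" using Tz_rec[of 5] tz7 tz6 tz5 by simp
lemma tz9: "Tz 9 = 81" using Tz_rec[of 6] tz8 tz7 tz6 by simp
lemma tz10: "Tz 10 = 149" using Tz_rec[of 7] tz9 tz8 tz7 by simp
lemma tz11: "Tz 11 = 274" using Tz_rec[of 8] tz10 tz9 tz8 by simp
lemma tz12: "Tz 12 = 504" using Tz_rec[of 9] tz11 tz10 tz9 by simp
lemma tz13: "Tz 13 = 927" using Tz_rec[of 10] tz12 tz11 tz10 by simp
lemma tz14: "Tz 14 = 1705" using Tz_rec[of 11] tz13 tz12 tz11 by simp
lemma tz15: "Tz 15 = 3136" using Tz_rec[of 12] tz14 tz13 tz12 by simp
lemma tz16: "Tz 16 = 5768" using Tz_rec[of 13] tz15 tz14 tz13 by simp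
lemma tz17: "Tz 17 = 10609" using Tz_rec[of 14] tz16 tz15 tz14 by simp
lemma tz18: "Tz 18 = 19513" using Tz_rec[of 15] tz17 tz16 tz15 by simp
lemma tz19: "Tz 19 = 35890" using Tz_rec[of 16] tz18 tz17 tz16 by simp
lemma tz20: "Tz 20 = 66012" using Tz_rec[of 17] tz19 tz18 tz17 by simp
lemma tz21: "Tz 21 = 121415" using Tz_rec[of 18] tz20 tz19 tz18 by simp
lemma tz22: "Tz 22 = 223317" using Tz_rec[of 19] tz21 tz20 tz19 by simp
lemma tz23: "Tz 23 = 410744" using Tz_rec[of 20] tz22 tz21 tz20 by simp
lemma tz24: "Tz 24 = 755476" using Tz_rec[of 21] tz23 tz22 tz21 by simp
lemma tz25: "Tz 25 = 1389537" using Tz_rec[of 22] tz24 tz23 tz22 by simp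
lemma tz26: "Tz 26 = 2555757" using Tz_rec[of 23] tz25 tz24 tz23 by simp
lemma tz27: "Tz 27 = 4700770" using Tz_rec[of 24] tz26 tz25 tz24 by simp
lemma tz28: "Tz 28 = 8646064" using Tz_rec[of 25] tz27 tz26 tz25 by simp
lemma tz29: "Tz 29 = 15902591" using Tz_rec[of 26] tz28 tz27 tz26 by simp
lemma tz30: "Tz 30 = 29249425" using Tz_rec[of 27] tz29 tz28 tz27 by simp
lemma tz31: "Tz 31 = 53798080" using Tz_rec[of 28] tz30 tz29 tz28 by simp
lemma tz32: "Tz 32 = 98950096" using Tz_rec[of 29] tz31 tz30 tz29 by simp
lemma tz33: "Tz 33 = 181997601" using Tz_rec[of 30] tz32 tz31 tz30 by simp
lemma tz34: "Tz 34 = 334745777" using Tz_rec[of 31] tz33 tz32 tz31 by simp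
lemma tz35: "Tz 35 = 615693474" using Tz_rec[of 32] tz34 tz33 tz32 by simp
lemma tz36: "Tz 36 = 1132436852" using Tz_rec[of 33] tz35 tz34 tz33 by simp
lemma tz37: "Tz 37 = 2082876103" using Tz_rec[of 34] tz36 tz35 tz34 by simp
lemma tz38: "Tz 38 = 3831006429" using Tz_rec[of 35] tz37 tz36 tz35 by simp
lemma tz39: "Tz 39 = 7046319384" using Tz_rec[of 36] tz38 tz37 tz36 by simp
lemma tz40: "Tz 40 = 12960201916" using Tz_rec[of 37] tz39 tz38 tz37 by simp
lemma tzm1: "Tz (-1) = 0" using Tz_rec[of "-1"] tz0 tz1 tz2 by simp
lemma tzm2: "Tz (-2) = 1" using Tz_rec[of "-2"] tzm1 tz0 tz1 by simp
lemma tzm3: "Tz (-3) = -1" using Tz_rec[of "-3"] tzm2 tzm1 tz0 by simp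
lemma tzm4: "Tz (-4) = 0" using Tz_rec[of "-4"] tzm3 tzm2 tzm1 by simp
lemma tzm5: "Tz (-5) = 2" using Tz_rec[of "-5"] tzm4 tzm3 tzm2 by simp
lemma tzm6: "Tz (-6) = -3" using Tz_rec[of "-6"] tzm5 tzm4 tzm3 by simp
lemma tzm7: "Tz (-7) = 1" using Tz_rec[of "-7"] tzm6 tzm5 tzm4 by simp
lemma tzm8: "Tz (-8) = 4" using Tz_rec[of "-8"] tzm7 tzm6 tzm5 by simp
lemma tzm9: "Tz (-9) = -8" using Tz_rec[of "-9"] tzm8 tzm7 tzm6 by simp
lemma tzm10: "Tz (-10) = 5" using Tz_rec[of "-10"] tzm9 tzm8 tzm7 by simp
lemma tzm11: "Tz (-11) = 7" using Tz_rec[of "-11"] tzm10 tzm9 tzm8 by simp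
lemma tzm12: "Tz (-12) = -20" using Tz_rec[of "-12"] tzm11 tzm10 tzm9 by simp
lemma tzm13: "Tz (-13) = 18" using Tz_rec[of "-13"] tzm12 tzm11 tzm10 by simp
lemma tzm14: "Tz (-14) = 9" using Tz_rec[of "-14"] tzm13 tzm12 tzm11 by simp
lemma tzm15: "Tz (-15) = -47" using Tz_rec[of "-15"] tzm14 tzm13 tzm12 by simp
lemma tzm16: "Tz (-16) = 56" using Tz_rec[of "-16"] tzm15 tzm14 tzm13 by simp
lemma tzm17: "Tz (-17) = 0" using Tz_rec[of "-17"] tzm16 tzm15 tzm14 by simp
lemma tzm18: "Tz (-18) = -103" using Tz_rec[of "-18"] tzm17 tzm16 tzm15 by simp
lemma tzm19: "Tz (-19) = 159" using Tz_rec[of "-19"] tzm18 tzm17 tzm16 by simp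
lemma tzm20: "Tz (-20) = -56" using Tz_rec[of "-20"] tzm19 tzm18 tzm17 by simp


definition L :: "int \<Rightarrow> int poly \<Rightarrow> int" where
  "L c p = (\<Sum>i\<le>degree p. coeff p i * Tz (c + int i))"

lemma L_upto: assumes "degree p < N" shows "L c p = (\<Sum>i<N. coeff p i * Tz (c + int i))"
proof -
  have "(\<Sum>i<N. coeff p i * Tz (c + int i)) = (\<Sum>i\<le>degree p. coeff p i * Tz (c + int i))"
    by (rule sum.mono_neutral_right) (use assms in \<open>auto simp: coeff_eq_0\<close>)
  then show ?thesis by (simp add: L_def)
qed

lemma L_add: "L c (p + q) = L c p + L c q"
proof -
  define N where "N = Suc (max (degree p) (degree q))"
  have "degree (p+q) < N" using degree_add_le_max[of p q] unfolding N_def by linarith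
  then show ?thesis
    using L_upto[where p=p and N=N and c=c] L_upto[where p=q and N=N and c=c] L_upto[where p="p+q" and N=N and c=c]
    by (simp add: N_def sum.distrib distrib_right)
qed

lemma L_smult: "L c (smult a p) = a * L c p"
proof -
  have "degree (smult a p) < Suc (degree p)" using degree_smult_le[of a p] by linarith
  then have "L c (smult a p) = (\<Sum>i<Suc (degree p). a * (coeff p i * Tz (c + int i)))"
    using L_upto[where p="smult a p" and N="Suc (degree p)" and c=c] by (simp add: mult.assoc)
  also have "\<dots> = a * L c p" using L_upto[where p=p and N="Suc (degree p)" and c=c]
    by (simp only: sum_distrib_left)
  finally show ?thesis .
qed

lemma L_pCons: "L c (pCons a p) = a * Tz c + L (c+1) p"
proof -
  define N where "N = Suc (degree p)"
  have d: "degree (pCons a p) < Suc N" unfolding N_def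
    by (metis Suc_le_eq degree_pCons_le le_imp_less_Suc)
  have "L c (pCons a p) = (\<Sum>i<Suc N. coeff (pCons a p) i * Tz (c + int i))" using L_upto[OF d] .
  also have "\<dots> = a * Tz c + (\<Sum>i<N. coeff p i * Tz (c + 1 + int i))"
    by (subst sum.lessThan_Suc_shift) (simp add: add.assoc)
  also have "(\<Sum>i<N. coeff p i * Tz (c + 1 + int i)) = L (c+1) p"
    using L_upto[where p=p and N=N and c="c+1"] by (simp add: N_def)
  finally show ?thesis .
qed

lemma L_0[simp]: "L c 0 = 0" by (simp add: L_def)

lemma L_minus: "L c (p - q) = L c p - L c q"
  using L_add[of c "p - q" q] by simp

definition F :: "int poly" where "F = [:-1,-1,-1,1:]"

lemma L_F: "L c F = 0"
  using Tz_rec[of c] by (simp add: F_def L_pCons algebra_simps)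

lemma L_Fmult: "L c (F * s) = 0"
proof (induction s arbitrary: c)
  case 0 then show ?case by simp
next
  case (pCons a s)
  then show ?case by (simp add: L_add L_smult L_pCons L_F)
qed

lemma L_xpow: "L c ([:0,1:]^n) = Tz (c + int n)"
proof (induction n arbitrary: c)
  case 0 then show ?case by (simp add: L_pCons one_pCons)
next
  case (Suc n)
  have "[:0,1:]^Suc n = pCons 0 ([:0,1:]^n)" by simp
  then show ?case using Suc[of "c+1"] by (simp add: L_pCons add.assoc)
qed

definition cong3 :: "nat \<Rightarrow> int poly \<Rightarrow> int poly \<Rightarrow> bool" where
  "cong3 t p q \<longleftrightarrow> (\<exists>r s. p = q + 3^t * r + F * s)"

lemma pow3_smult: "(3::int poly)^t * r = smult (3^t) r"
  by (induction t) (simp_all add: numeral_mult_conv_smult)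

lemma cong3_L: assumes "cong3 t p q" shows "(3::int)^t dvd L c p - L c q"
proof -
  obtain r s where "p = q + 3^t * r + F * s" using assms cong3_def by blast
  then have "L c p - L c q = 3^t * L c r"
    by (simp add: L_add L_Fmult pow3_smult L_smult)
  then show ?thesis by simp
qed

lemma cong3_refl: "cong3 t p p" unfolding cong3_def by (rule exI[of _ 0], rule exI[of _ 0]) simp

lemma cong3_sym: "cong3 t p q \<Longrightarrow> cong3 t q p"
  unfolding cong3_def
proof (elim exE)
  fix r s assume "p = q + 3^t*r + F*s"
  then have "q = p + 3^t*(-r) + F*(-s)" by simp
  then show "\<exists>r s. q = p + 3^t*r + F*s" by blast
qed

lemma cong3_trans: "cong3 t p q \<Longrightarrow> cong3 t q w \<Longrightarrow> cong3 t p w"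
  unfolding cong3_def
proof (elim exE)
  fix r s r' s' assume "p = q + 3^t*r + F*s" "q = w + 3^t*r' + F*s'"
  then have "p = w + 3^t*(r+r') + F*(s+s')" by (simp add: algebra_simps)
  then show "\<exists>r s. p = w + 3^t*r + F*s" by blast
qed

lemma cong3_mult: "cong3 t p q \<Longrightarrow> cong3 t p' q' \<Longrightarrow> cong3 t (p*p') (q*q')"
  unfolding cong3_def
proof (elim exE)
  fix r s r' s' assume "p = q + 3^t*r + F*s" "p' = q' + 3^t*r' + F*s'"
  then have "p*p' = q*q' + 3^t*(r*q' + q*r' + 3^t*r*r' + F*s*r' + r*F*s') + F*(s*q' + q*s' + F*s*s')"
    by (simp add: algebra_simps)
  then show "\<exists>r s. p*p' = q*q' + 3^t*r + F*s" by blast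
qed

lemma cong3_add: "cong3 t p q \<Longrightarrow> cong3 t p' q' \<Longrightarrow> cong3 t (p+p') (q+q')"
  unfolding cong3_def
proof (elim exE)
  fix r s r' s' assume "p = q + 3^t*r + F*s" "p' = q' + 3^t*r' + F*s'"
  then have "p+p' = (q+q') + 3^t*(r+r') + F*(s+s')" by (simp add: algebra_simps)
  then show "\<exists>r s. p+p' = (q+q') + 3^t*r + F*s" by blast
qed

lemma cong3_pow: "cong3 t p q \<Longrightarrow> cong3 t (p^n) (q^n)"
  by (induction n) (simp_all add: cong3_refl cong3_mult)

lemma cong3_mono: "cong3 t p q \<Longrightarrow> t' \<le> t \<Longrightarrow> cong3 t' p q"
  unfolding cong3_def
proof (elim exE)
  fix r s assume "p = q + 3^t*r + F*s" "t' \<le> t"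
  then have "p = q + 3^t'*(3^(t-t')*r) + F*s"
    by (simp add: mult.assoc[symmetric] power_add[symmetric])
  then show "\<exists>r s. p = q + 3^t'*r + F*s" by blast
qed

lemma cong3_F: "(\<exists>s. p = q + F*s) \<Longrightarrow> cong3 t p q"
  unfolding cong3_def
proof (elim exE)
  fix s assume "p = q + F*s"
  then have "p = q + 3^t*0 + F*s" by simp
  then show "\<exists>r s. p = q + 3^t*r + F*s" by blast
qed

lemma cong3_mul3: "p = q + 3^t * r \<Longrightarrow> cong3 t p q"
  unfolding cong3_def
proof -
  assume "p = q + 3^t * r"
  then have "p = q + 3^t*r + F*0" by simp
  then show "\<exists>r s. p = q + 3^t*r + F*s" by blast
qed



lemma x_red: "\<exists>s. [:0,1:]^n = [:Tz (int n - 2), Tz (int n - 2) + Tz (int n - 3), Tz (int n - 1):] + F*s"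
proof (induction n)
  case 0
  have "[:0,1:]^0 = [:Tz (int 0 - 2), Tz (int 0 - 2) + Tz (int 0 - 3), Tz (int 0 - 1):] + F*0"
    using tzm1 tzm2 tzm3 by (simp add: one_pCons)
  then show ?case by blast
next
  case (Suc n)
  then obtain s where s: "[:0,1:]^n = [:Tz (int n - 2), Tz (int n - 2) + Tz (int n - 3), Tz (int n - 1):] + F*s" by blast
  have xm: "[:0,1:] * [:a,b,c:] = [:c, a+c, b+c:] + F*[:c:]" for a b c :: int
    by (simp add: F_def)
  have r: "Tz (int n) = Tz (int n - 1) + Tz (int n - 2) + Tz (int n - 3)"
    using Tz_rec[of "int n - 3"] by (simp add: algebra_simps)
  have "[:0,1:]^Suc n = [:0,1:] * [:Tz (int n - 2), Tz (int n - 2) + Tz (int n - 3), Tz (int n - 1):] + F*([:0,1:]*s)"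
    by (simp add: s algebra_simps)
  also have "\<dots> = [:Tz (int n - 1), Tz (int n - 2) + Tz (int n - 1), Tz (int n - 2) + Tz (int n - 3) + Tz (int n - 1):] + F*([:Tz (int n - 1):] + [:0,1:]*s)"
    by (simp only: xm) (simp add: algebra_simps)
  also have "\<dots> = [:Tz (int (Suc n) - 2), Tz (int (Suc n) - 2) + Tz (int (Suc n) - 3), Tz (int (Suc n) - 1):] + F*([:Tz (int n - 1):] + [:0,1:]*s)"
    using r by (simp add: algebra_simps)
  finally show ?case by blast
qed

lemma base_id:
  fixes A \<alpha> a Y K r s e FF :: "'a::comm_ring_1"
  shows "(\<alpha>*a + Y*K*a*e + Y*Y*r + FF*s) * (\<alpha> + Y*e)
     = (\<alpha>*(\<alpha>*a) + Y*(K+1)*(\<alpha>*a)*e) + Y*Y*(r*(\<alpha>+Y*e) + K*a*e^2) + FF*(s*(\<alpha>+Y*e))"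
  by (simp add: algebra_simps power2_eq_square)

lemma lte_base:
  fixes \<alpha> e :: "int poly"
  shows "cong3 (2*s) ((\<alpha> + 3^s*e)^(Suc j)) (\<alpha>^(Suc j) + 3^s * of_nat (Suc j) * \<alpha>^j * e)"
proof (induction j)
  case 0 then show ?case by (simp add: cong3_refl)
next
  case (Suc j)
  then obtain r s' where h: "(\<alpha> + 3^s*e)^(Suc j) = \<alpha>^(Suc j) + 3^s * of_nat (Suc j) * \<alpha>^j * e + 3^(2*s)*r + F*s'"
    unfolding cong3_def by blast
  have e2: "(3::int poly)^(2*s) = 3^s*3^s" by (simp add: mult_2 power_add)
  have "(\<alpha> + 3^s*e)^(Suc (Suc j)) = (\<alpha>*\<alpha>^j + 3^s * of_nat (Suc j) * \<alpha>^j * e + 3^s*3^s*r + F*s') * (\<alpha> + 3^s*e)"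
    using h e2 by (simp add: mult.commute)
  also have "\<dots> = (\<alpha>*(\<alpha>*\<alpha>^j) + 3^s*(of_nat (Suc j)+1)*(\<alpha>*\<alpha>^j)*e) + 3^s*3^s*(r*(\<alpha>+3^s*e) + of_nat (Suc j)*\<alpha>^j*e^2) + F*(s'*(\<alpha>+3^s*e))"
    by (rule base_id)
  also have "\<dots> = (\<alpha>^(Suc (Suc j)) + 3^s * of_nat (Suc (Suc j)) * \<alpha>^(Suc j) * e) + 3^(2*s)*(r*(\<alpha>+3^s*e) + of_nat (Suc j)*\<alpha>^j*e^2) + F*(s'*(\<alpha>+3^s*e))"
    using e2 by (simp add: algebra_simps)
  finally show ?case unfolding cong3_def by blast
qed

lemma cube_id:
  fixes A R Z :: "'a::comm_ring_1"
  shows "(A + 3*Z*R)^3 = A^3 + 3*(3*Z)*(A^2*R + 3*Z*A*R^2 + Z*(3*Z)*R^3)"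
  by (simp add: algebra_simps power2_eq_square power3_eq_cube)

lemma trip_id:
  fixes \<alpha> a e Y0 Z Q :: "'a::comm_ring_1"
  shows "(\<alpha>*a + (3*Y0)*(Z*Q)*a*e)^3 = (\<alpha>^3*a^3 + (3*Y0)*(3*(Z*Q))*(\<alpha>^2*a^3)*e) + 3*(3*Y0)^2*Z*(Z*Q^2*\<alpha>*a^3*e^2 + Y0*Z^2*Q^3*a^3*e^3)"
  by (simp add: algebra_simps power2_eq_square power3_eq_cube)

lemma lte:
  fixes \<alpha> e :: "int poly"
  assumes "1 \<le> s"
  shows "cong3 (m + 2*s) ((\<alpha> + 3^s*e)^(3^m * Suc q)) (\<alpha>^(3^m*Suc q) + 3^s * of_nat (3^m*Suc q) * \<alpha>^(3^m*Suc q - 1) * e)"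
proof (induction m)
  case 0 then show ?case using lte_base[of s \<alpha> e q] by simp
next
  case (Suc m)
  define k where "k = 3^m * Suc q"
  obtain j where kj: "k = Suc j" unfolding k_def by (metis Zero_neq_Suc mult_is_0 not0_implies_Suc power_not_zero zero_neq_numeral)
  define P where "P = \<alpha> + 3^s*e"
  define A where "A = \<alpha>^k + 3^s * of_nat k * \<alpha>^j * e"
  define t where "t = m + 2*s"
  obtain t0 where t0: "t = Suc t0" unfolding t_def using assms by (metis add_is_0 mult_is_0 not0_implies_Suc not_one_le_zero zero_neq_numeral)
  from Suc obtain R S where h: "P^k = A + 3^t*R + F*S"
    unfolding cong3_def P_def A_def t_def k_def using kj k_def by auto
  have h1: "cong3 (t+1) (P^k) (A + 3^t*R)" using h by (intro cong3_F) blast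
  have h2: "cong3 (t+1) (P^(3*k)) ((A + 3^t*R)^3)"
    using cong3_pow[OF h1, of 3] by (simp add: power_mult mult.commute)
  have "(A + 3^t*R)^3 = A^3 + 3^(t+1)*(A^2*R + 3*3^t0*A*R^2 + 3^t0*(3*3^t0)*R^3)"
    using cube_id[of A "3^t0" R] by (simp add: t0 mult.assoc)
  then have h3: "cong3 (t+1) ((A + 3^t*R)^3) (A^3)" by (rule cong3_mul3)
  obtain s0 where s0: "s = Suc s0" using assms by (cases s) auto
  define Q :: "int poly" where "Q = of_nat (Suc q)"
  have kQ: "(of_nat k :: int poly) = 3^m * Q" by (simp add: k_def Q_def algebra_simps)
  have "A^3 = (\<alpha>*\<alpha>^j + (3*3^s0)*(3^m*Q)*\<alpha>^j*e)^3"
    by (simp add: A_def kj[symmetric] kQ s0) (simp add: kj)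
  also have "\<dots> = (\<alpha>^3*(\<alpha>^j)^3 + (3*3^s0)*(3*(3^m*Q))*(\<alpha>^2*(\<alpha>^j)^3)*e) + 3*(3*3^s0)^2*3^m*(3^m*Q^2*\<alpha>*(\<alpha>^j)^3*e^2 + 3^s0*(3^m)^2*Q^3*(\<alpha>^j)^3*e^3)"
    by (rule trip_id)
  also have "\<dots> = (\<alpha>^(3*k) + 3^s * of_nat (3*k) * \<alpha>^(3*k - 1) * e) + 3^(t+1)*(3^m*Q^2*\<alpha>*(\<alpha>^j)^3*e^2 + 3^s0*(3^m)^2*Q^3*(\<alpha>^j)^3*e^3)"
  proof -
    have a1: "\<alpha>^3*(\<alpha>^j)^3 = \<alpha>^(3*k)" by (simp add: kj power_mult[symmetric] power_add[symmetric] algebra_simps)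
    have a2: "\<alpha>^2*(\<alpha>^j)^3 = \<alpha>^(3*k - 1)" by (simp add: kj power_mult[symmetric] power_add[symmetric] algebra_simps)
    have a3: "(3*3^s0)*(3*(3^m*Q)) = (3::int poly)^s * of_nat (3*k)" by (simp add: kQ s0)
    have a4: "3*(3*3^s0)^2*3^m = (3::int poly)^(t+1)"
    proof -
      have "t+1 = m + s0 + s0 + 3" by (simp add: t_def s0)
      then have "(3::int poly)^(t+1) = 3^m * 3^s0 * 3^s0 * 3^3" by (simp only: power_add)
      then show ?thesis by (simp add: power2_eq_square power3_eq_cube algebra_simps)
    qed
    show ?thesis by (simp only: a1 a2 a3 a4)
  qed
  finally have h4: "cong3 (t+1) (A^3) (\<alpha>^(3*k) + 3^s * of_nat (3*k) * \<alpha>^(3*k - 1) * e)" by (rule cong3_mul3)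
  have "cong3 (t+1) (P^(3*k)) (\<alpha>^(3*k) + 3^s * of_nat (3*k) * \<alpha>^(3*k - 1) * e)"
    using cong3_trans[OF h2 cong3_trans[OF h3 h4]] .
  moreover have "3^Suc m * Suc q = 3*k" by (simp add: k_def)
  ultimately show ?case by (simp add: P_def t_def)
qed



lemma prime3i: "prime (3::int)"
proof -
  have "{2..<3::int} = {2}" by auto
  then show ?thesis by (simp add: prime_int_iff')
qed
lemma prime3n: "prime (3::nat)"
proof -
  have "{2..<3::nat} = {2}" by auto
  then show ?thesis by (simp add: prime_nat_iff')
qed

lemma const_pow: "[:a:]^n = [:a^n:]"
  by (induction n) (simp_all add: one_pCons algebra_simps)

lemma L_const_mult: "L c ([:b:] * p) = b * L c p"
  by (simp add: L_smult)

lemma L_target: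
  "L c ((of_int a :: int poly) ^ k + 3^s * of_nat k * (of_int a)^j * e) = a^k * Tz c + 3^s * int k * a^j * L c e"
proof -
  have "(of_int a :: int poly) ^ k + 3^s * of_nat k * (of_int a)^j * e = [:a^k:] + [:3^s * int k * a^j:] * e"
    by (simp add: of_int_poly of_nat_poly numeral_poly const_pow mult_ac)
  then show ?thesis by (simp add: L_add L_const_mult L_pCons L_smult algebra_simps)
qed

lemma L_const_pow: "L c ((of_int a :: int poly) ^ k) = a^k * Tz c"
proof -
  have "(of_int a :: int poly) ^ k = [:a^k:]" by (simp add: of_int_poly const_pow)
  then show ?thesis by (simp add: L_pCons)
qed

lemma L3: "L c [:x0, x1, x2:] = x0 * Tz c + x1 * Tz (c+1) + x2 * Tz (c+2)"
  by (simp add: L_pCons add.assoc)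

lemma x13: "\<exists>s. [:0,1:]^13 = of_int 4 + 3^2 * [:30,47,56:] + F*s"
proof -
  obtain s where "[:0,1:]^13 = [:Tz (int 13 - 2), Tz (int 13 - 2) + Tz (int 13 - 3), Tz (int 13 - 1):] + F*s"
    using x_red by blast
  moreover have "[:Tz (int 13 - 2), Tz (int 13 - 2) + Tz (int 13 - 3), Tz (int 13 - 1):] = (of_int 4 + 3^2 * [:30,47,56:] :: int poly)"
    by (simp add: tz10 tz11 tz12 numeral_poly const_pow)
  ultimately show ?thesis by auto
qed

lemma x39: "\<exists>s. [:0,1:]^39 = of_int 64 + 3^3 * [:77143557,119085665,141889127:] + F*s"
proof -
  obtain s where "[:0,1:]^39 = [:Tz (int 39 - 2), Tz (int 39 - 2) + Tz (int 39 - 3), Tz (int 39 - 1):] + F*s"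
    using x_red by blast
  moreover have "[:Tz (int 39 - 2), Tz (int 39 - 2) + Tz (int 39 - 3), Tz (int 39 - 1):] = (of_int 64 + 3^3 * [:77143557,119085665,141889127:] :: int poly)"
    by (simp add: tz36 tz37 tz38 numeral_poly const_pow)
  ultimately show ?thesis by auto
qed

lemma key13:
  assumes "k = 3^m * Suc q"
  shows "(3::int)^(m+4) dvd Tz (c + 13*int k) - (4^k*Tz c + 9*int k*4^(k-1)*(30*Tz c + 47*Tz(c+1) + 56*Tz(c+2)))"
proof -
  define d :: "int poly" where "d = [:30,47,56:]"
  have h1: "cong3 (m+4) ([:0,1:]^13) (of_int 4 + 3^2*d)"
    using x13 unfolding d_def by (intro cong3_F) auto
  have h2: "cong3 (m+4) ([:0,1:]^(13*k)) ((of_int 4 + 3^2*d)^k)"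
    using cong3_pow[OF h1, of k] by (simp add: power_mult)
  have h3: "cong3 (m+4) ((of_int 4 + 3^2*d)^k) ((of_int 4)^k + 3^2 * of_nat k * (of_int 4)^(k-1) * d)"
    using lte[where s=2 and \<alpha>="of_int 4" and e=d and m=m and q=q] assms by (simp add: numeral_eq_Suc)
  have "(3::int)^(m+4) dvd L c ([:0,1:]^(13*k)) - L c ((of_int 4)^k + 3^2 * of_nat k * (of_int 4)^(k-1) * d)"
    using cong3_L[OF cong3_trans[OF h2 h3]] .
  then show ?thesis by (simp only: L_xpow L_target d_def L3) simp
qed

lemma key39:
  assumes "k = 3^m * Suc q"
  shows "(3::int)^(m+6) dvd Tz (c + 39*int k) - (64^k*Tz c + 27*int k*64^(k-1)*(77143557*Tz c + 119085665*Tz(c+1) + 141889127*Tz(c+2)))"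
proof -
  define d :: "int poly" where "d = [:77143557,119085665,141889127:]"
  have h1: "cong3 (m+6) ([:0,1:]^39) (of_int 64 + 3^3*d)"
    using x39 unfolding d_def by (intro cong3_F) auto
  have h2: "cong3 (m+6) ([:0,1:]^(39*k)) ((of_int 64 + 3^3*d)^k)"
    using cong3_pow[OF h1, of k] by (simp add: power_mult)
  have h3: "cong3 (m+6) ((of_int 64 + 3^3*d)^k) ((of_int 64)^k + 3^3 * of_nat k * (of_int 64)^(k-1) * d)"
    using lte[where s=3 and \<alpha>="of_int 64" and e=d and m=m and q=q] assms by (simp add: numeral_eq_Suc)
  have "(3::int)^(m+6) dvd L c ([:0,1:]^(39*k)) - L c ((of_int 64)^k + 3^3 * of_nat k * (of_int 64)^(k-1) * d)"
    using cong3_L[OF cong3_trans[OF h2 h3]] .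
  then show ?thesis by (simp only: L_xpow L_target d_def L3) simp
qed

lemma key9: "(9::int) dvd Tz (c + 13*int k) - 4^k*Tz c"
proof -
  obtain s where s: "[:0,1:]^13 = of_int 4 + 3^2 * [:30,47,56:] + F*s" using x13 by blast
  have h1: "cong3 2 ([:0,1:]^13) (of_int 4)"
    unfolding cong3_def using s by blast
  have h2: "cong3 2 ([:0,1:]^(13*k)) ((of_int 4)^k)"
    using cong3_pow[OF h1, of k] by (simp add: power_mult)
  have "(3::int)^2 dvd L c ([:0,1:]^(13*k)) - L c ((of_int 4)^k)"
    using cong3_L[OF h2] .
  then show ?thesis by (simp only: L_xpow L_const_pow) simp
qed

lemma mult_int: fixes x u :: int assumes "x = 3^t * u" "\<not> 3 dvd u" shows "multiplicity 3 x = t"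
proof -
  have "u \<noteq> 0" using assms by auto
  then have "multiplicity 3 x = multiplicity 3 ((3::int)^t) + multiplicity 3 u"
    using assms(1) prime3i by (simp add: prime_elem_multiplicity_mult_distrib)
  also have "\<dots> = t" using assms(2) prime3i by (simp add: not_dvd_imp_multiplicity_0)
  finally show ?thesis .
qed

lemma val_approx: fixes x u :: int assumes "3^(Suc t) dvd x - 3^t*u" "\<not> 3 dvd u" shows "multiplicity 3 x = t"
proof -
  obtain w where w: "x - 3^t*u = 3^(Suc t) * w" using assms(1) by blast
  then have "x = 3^t * (u + 3*w)" by (simp add: algebra_simps)
  moreover have "\<not> 3 dvd (u + 3*w)" using assms(2) by (simp add: dvd_add_left_iff)
  ultimately show ?thesis by (rule mult_int)
qed

lemma nd_pow: "\<not> (3::int) dvd 4^k" "\<not> (3::int) dvd 64^k"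
  using prime_dvd_power[OF prime3i, of 4 k] prime_dvd_power[OF prime3i, of 64 k] by auto

lemma nd_mult: "\<not> (3::int) dvd a \<Longrightarrow> \<not> 3 dvd b \<Longrightarrow> \<not> 3 dvd a*b"
  using prime3i by (simp add: prime_dvd_mult_iff)

lemma mult13: "k \<noteq> 0 \<Longrightarrow> multiplicity (3::nat) (13*k) = multiplicity 3 k"
  using prime3n by (simp add: prime_elem_multiplicity_mult_distrib not_dvd_imp_multiplicity_0)

lemma mult39: "k \<noteq> 0 \<Longrightarrow> multiplicity (3::nat) (39*k) = Suc (multiplicity 3 k)"
proof -
  assume k: "k \<noteq> 0"
  have "multiplicity (3::nat) (3*(13*k)) = multiplicity (3::nat) (3::nat) + multiplicity 3 (13*k)"
    using prime3n k by (intro prime_elem_multiplicity_mult_distrib) auto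
  moreover have "(39::nat)*k = 3*(13*k)" by simp
  moreover have "multiplicity (3::nat) 3 = 1" using prime3n multiplicity_prime_power[of 3 1] by simp
  ultimately show ?thesis using mult13[OF k] by (metis plus_1_eq_Suc)
qed



lemma fin: fixes x y u :: int
  assumes "3^T dvd x - y" "y = 3^t * u" "\<not> 3 dvd u" "t < T"
  shows "multiplicity 3 x = t"
proof -
  have "(3::int)^(Suc t) dvd 3^T" using assms(4) by (intro le_imp_power_dvd) simp
  then have "3^(Suc t) dvd x - 3^t*u" using assms(1,2) dvd_trans by blast
  then show ?thesis using assms(3) by (rule val_approx)
qed

lemma dec3: assumes "(k::nat) \<noteq> 0" shows "\<exists>q. k = 3^(multiplicity 3 k) * Suc q \<and> \<not> 3 dvd Suc q"
proof -
  obtain y where y: "k = 3^multiplicity 3 k * y" "\<not> 3 dvd y"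
  proof -
    have "\<not> is_unit (3::nat)" by simp
    then show ?thesis using multiplicity_decompose'[of k 3] assms that by blast
  qed
  have "y \<noteq> 0" using y(2) by (metis dvd_0_right)
  then obtain q where "y = Suc q" using not0_implies_Suc by blast
  then show ?thesis using y by blast
qed

lemma nd_nat: "\<not> 3 dvd (q::nat) \<Longrightarrow> \<not> (3::int) dvd int q"
  by presburger

lemma dm: "int n = int (n mod m) + int m * int (n div m)"
  by (metis mod_mult_div_eq of_nat_add of_nat_mult)

lemma caseA: assumes "n mod 13 \<in> {1,2,3,4,5,6,8,10,11}" shows "multiplicity (3::int) (trib n) = 0"
proof -
  define r where "r = n mod 13"
  define k where "k = n div 13"
  have n: "int n = int r + 13 * int k" unfolding r_def k_def using dm[of n 13] by simp
  have h: "9 dvd Tz (int r + 13*int k) - 4^k*Tz (int r)" by (rule key9)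
  have nd: "\<not> 3 dvd Tz (int r)" using assms unfolding r_def[symmetric]
    by (auto simp: tz1 tz2 tz3 tz4 tz5 tz6 tz8 tz10 tz11)
  have "3^2 dvd trib n - 4^k*Tz (int r)" using h n Tz_nat[of n] by simp
  then show ?thesis by (rule fin[where t=0 and u="4^k*Tz (int r)"]) (use nd nd_pow nd_mult in auto)
qed

lemma caseB: assumes "n mod 13 = 7" shows "multiplicity (3::int) (trib n) = 1"
proof -
  define k where "k = n div 13"
  have n: "int n = 7 + 13 * int k" using assms dm[of n 13] unfolding k_def by simp
  have h: "9 dvd Tz (7 + 13*int k) - 4^k*Tz 7" by (rule key9)
  have "3^2 dvd trib n - 4^k*24" using h n Tz_nat[of n] tz7 by simp
  then show ?thesis by (rule fin[where t=1 and u="4^k*8"]) (use nd_pow nd_mult in auto)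
qed

lemma caseC: assumes "n mod 13 = 0" "n \<ge> 1"
  shows "multiplicity (3::int) (trib n) = multiplicity (3::nat) n + 2"
proof -
  define k where "k = n div 13"
  have nk: "n = 13 * k" using assms mod_mult_div_eq[of n 13] unfolding k_def by simp
  then have k0: "k \<noteq> 0" using assms by auto
  define m where "m = multiplicity 3 k"
  obtain q where q: "k = 3^m * Suc q" "\<not> 3 dvd Suc q" using dec3[OF k0] m_def by blast
  have h: "(3::int)^(m+4) dvd Tz (0 + 13*int k) - (4^k*Tz 0 + 9*int k*4^(k-1)*(30*Tz 0 + 47*Tz(0+1) + 56*Tz(0+2)))"
    by (rule key13[OF q(1)])
  have "(3::int)^(m+4) dvd trib n - 9*int k*4^(k-1)*103" using h nk Tz_nat[of n] tz0 tz1 tz2 by simp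
  moreover have "9*int k*4^(k-1)*103 = 3^(m+2) * (int (Suc q)*4^(k-1)*103)"
    using q(1) by (simp add: power_add algebra_simps)
  ultimately have "multiplicity (3::int) (trib n) = m + 2"
    by (rule fin) (use nd_pow nd_mult nd_nat[OF q(2)] in auto)
  moreover have "multiplicity (3::nat) n = m" using mult13[OF k0] nk m_def by simp
  ultimately show ?thesis by simp
qed

lemma caseD: assumes "n mod 13 = 12"
  shows "multiplicity (3::int) (trib n) = multiplicity (3::nat) (n+1) + 2"
proof -
  define k where "k = n div 13 + 1"
  have nk: "n + 1 = 13 * k" using assms mod_mult_div_eq[of n 13] unfolding k_def by simp
  then have k0: "k \<noteq> 0" by auto
  have ni: "int n = -1 + 13 * int k" using nk by linarith
  define m where "m = multiplicity 3 k"
  obtain q where q: "k = 3^m * Suc q" "\<not> 3 dvd Suc q" using dec3[OF k0] m_def by blast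
  have h: "(3::int)^(m+4) dvd Tz (-1 + 13*int k) - (4^k*Tz (-1) + 9*int k*4^(k-1)*(30*Tz (-1) + 47*Tz(-1+1) + 56*Tz(-1+2)))"
    by (rule key13[OF q(1)])
  have "(3::int)^(m+4) dvd trib n - 9*int k*4^(k-1)*56" using h ni Tz_nat[of n] tz0 tz1 tzm1 by simp
  moreover have "9*int k*4^(k-1)*56 = 3^(m+2) * (int (Suc q)*4^(k-1)*56)"
    using q(1) by (simp add: power_add algebra_simps)
  ultimately have "multiplicity (3::int) (trib n) = m + 2"
    by (rule fin) (use nd_pow nd_mult nd_nat[OF q(2)] in auto)
  moreover have "multiplicity (3::nat) (n+1) = m" using mult13[OF k0] nk m_def by simp
  ultimately show ?thesis by simp
qed

lemma caseE: assumes "n mod 39 = 9" shows "multiplicity (3::int) (trib n) = 4"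
proof -
  define j where "j = n div 39"
  have nj: "int n = 9 + 39 * int j" using assms dm[of n 39] unfolding j_def by simp
  show ?thesis
  proof (cases j)
    case 0
    then have "trib n = 3^4 * 1" using nj Tz_nat[of n] tz9 by simp
    then show ?thesis by (rule mult_int) simp
  next
    case (Suc q)
    have j1: "j = 3^0 * Suc q" using Suc by simp
    have h: "(3::int)^(0+6) dvd Tz (9 + 39*int j) - (64^j*Tz 9 + 27*int j*64^(j-1)*(77143557*Tz 9 + 119085665*Tz(9+1) + 141889127*Tz(9+2)))"
      by (rule key39[OF j1])
    then have h': "(3::int)^6 dvd trib n - (64^j*81 + 243*(int j*64^(j-1)*6985557000))"
      using nj Tz_nat[of n] tz9 tz10 tz11 by (simp add: algebra_simps)
    define B where "B = 243*(int j*64^(j-1)*6985557000)"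
    have b1: "(3::int)^5 dvd B" unfolding B_def by simp
    have b2: "(3::int)^5 dvd trib n - (64^j*81 + B)"
      using h' unfolding B_def by (rule dvd_trans[rotated]) simp
    have "trib n - 64^j*81 = (trib n - (64^j*81 + B)) + B" by simp
    then have "(3::int)^5 dvd trib n - 64^j*81"
      using dvd_add[OF b2 b1] by metis
    then show ?thesis by (rule fin[where t=4 and u="64^j"]) (use nd_pow in auto)
  qed
qed

lemma caseF: assumes "n mod 39 = 22"
  shows "multiplicity (3::int) (trib n) = multiplicity (3::nat) (n+17) + 4"
proof -
  define k where "k = n div 39 + 1"
  have nk: "n + 17 = 39 * k" using assms mod_mult_div_eq[of n 39] unfolding k_def by simp
  then have k0: "k \<noteq> 0" by auto
  have ni: "int n = -17 + 39 * int k" using nk by linarith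
  define m where "m = multiplicity 3 k"
  obtain q where q: "k = 3^m * Suc q" "\<not> 3 dvd Suc q" using dec3[OF k0] m_def by blast
  have h: "(3::int)^(m+6) dvd Tz (-17 + 39*int k) - (64^k*Tz (-17) + 27*int k*64^(k-1)*(77143557*Tz (-17) + 119085665*Tz(-17+1) + 141889127*Tz(-17+2)))"
    by (rule key39[OF q(1)])
  have "(3::int)^(m+6) dvd trib n - 27*int k*64^(k-1)*8271" using h ni Tz_nat[of n] tzm17 tzm16 tzm15 by simp
  moreover have "27*int k*64^(k-1)*8271 = 3^(m+5) * (int (Suc q)*64^(k-1)*919)"
    using q(1) by (simp add: power_add algebra_simps)
  ultimately have "multiplicity (3::int) (trib n) = m + 5"
    by (rule fin) (use nd_pow nd_mult nd_nat[OF q(2)] in auto)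
  moreover have "multiplicity (3::nat) (n+17) = Suc m" using mult39[OF k0] nk m_def by simp
  ultimately show ?thesis by simp
qed

lemma caseG: assumes "n mod 39 = 35"
  shows "multiplicity (3::int) (trib n) = multiplicity (3::nat) (n+4) + 4"
proof -
  define k where "k = n div 39 + 1"
  have nk: "n + 4 = 39 * k" using assms mod_mult_div_eq[of n 39] unfolding k_def by simp
  then have k0: "k \<noteq> 0" by auto
  have ni: "int n = -4 + 39 * int k" using nk by linarith
  define m where "m = multiplicity 3 k"
  obtain q where q: "k = 3^m * Suc q" "\<not> 3 dvd Suc q" using dec3[OF k0] m_def by blast
  have h: "(3::int)^(m+6) dvd Tz (-4 + 39*int k) - (64^k*Tz (-4) + 27*int k*64^(k-1)*(77143557*Tz (-4) + 119085665*Tz(-4+1) + 141889127*Tz(-4+2)))"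
    by (rule key39[OF q(1)])
  have "(3::int)^(m+6) dvd trib n - 27*int k*64^(k-1)*22803462" using h ni Tz_nat[of n] tzm4 tzm3 tzm2 by simp
  moreover have "27*int k*64^(k-1)*22803462 = 3^(m+5) * (int (Suc q)*64^(k-1)*2533718)"
    using q(1) by (simp add: power_add algebra_simps)
  ultimately have "multiplicity (3::int) (trib n) = m + 5"
    by (rule fin) (use nd_pow nd_mult nd_nat[OF q(2)] in auto)
  moreover have "multiplicity (3::nat) (n+4) = Suc m" using mult39[OF k0] nk m_def by simp
  ultimately show ?thesis by simp
qed

theorem theorem3:
  fixes n :: nat
  assumes "n \<ge> 1"
  shows "(n mod 13 \<in> {1,2,3,4,5,6,8,10,11} \<longrightarrow> multiplicity (3::int) (trib n) = 0)
       \<and> (n mod 13 = 7 \<longrightarrow> multiplicity (3::int) (trib n) = 1)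
       \<and> (n mod 13 = 0 \<longrightarrow> multiplicity (3::int) (trib n) = multiplicity (3::nat) n + 2)
       \<and> (n mod 13 = 12 \<longrightarrow> multiplicity (3::int) (trib n) = multiplicity (3::nat) (n + 1) + 2)
       \<and> (n mod 39 = 9 \<longrightarrow> multiplicity (3::int) (trib n) = 4)
       \<and> (n mod 39 = 22 \<longrightarrow> multiplicity (3::int) (trib n) = multiplicity (3::nat) (n + 17) + 4)
       \<and> (n mod 39 = 35 \<longrightarrow> multiplicity (3::int) (trib n) = multiplicity (3::nat) (n + 4) + 4)"
  using caseA caseB caseC[OF _ assms] caseD caseE caseF caseG by blast


end
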